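(* For all positive integers $k$ and $n$, \[ \mathrm{LT}(k,n)\geq 3^{-4/3}k^{-2/3}n-3^{-1/3}k^{1/3}. \]
   Context: For a positive integer $k$ let $[k]=\{1,\dots,k\}$. A subsequence of a word $w\in[k]^n$ is a word formed by letters of $w$ at positions $i_1<\dots<i_m$. Two subsequences of $w$ are called twins if they are equal as words and no position of $w$ is used in both. $\mathrm{LT}(w)$ is the maximum length of twins in $w$, and $\mathrm{LT}(k,n)=\min_{w\in[k]^n}\mathrm{LT}(w)$. *)

theory Defs
  imports Complex_Main
begin

definition twins :: "nat list \<Rightarrow> nat set \<Rightarrow> nat set \<Rightarrow> bool" where
  "twins w I J \<longleftrightarrow> I \<subseteq> {..<length w} \<and> J \<subseteq> {..<length w} \<and> I \<inter> J = {}
                    \<and> nths w I = nths w J"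

definition LT_word :: "nat list \<Rightarrow> nat" where
  "LT_word w = Max {length (nths w I) | I J. twins w I J}"

definition words :: "nat \<Rightarrow> nat \<Rightarrow> nat list set" where
  "words k n = {w. length w = n \<and> set w \<subseteq> {1..k}}"

definition LT :: "nat \<Rightarrow> nat \<Rightarrow> nat" where
  "LT k n = Min (LT_word ` words k n)"

end

theory Submission
  imports Defs
begin


lemma zip_self_filter: "map fst (filter (\<lambda>p. snd p \<in> A) (zip xs xs)) = filter (\<lambda>i. i \<in> A) xs"
  by (induction xs) auto

lemma nths_idx: "nths w A = map ((!) w) (filter (\<lambda>i. i \<in> A) [0..<length w])"
proof -
  have "nths w A = nths (map ((!) w) [0..<length w]) A" by (simp add: map_nth)
  also have "\<dots> = map ((!) w) (nths [0..<length w] A)" by (simp add: nths_map)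
  also have "nths [0..<length w] A = filter (\<lambda>i. i \<in> A) [0..<length w]"
    unfolding nths_def by (simp add: zip_self_filter)
  finally show ?thesis .
qed

lemma nths_sorted_list:
  assumes "sorted_wrt (<) is" "\<forall>i\<in>set is. i < length w"
  shows "nths w (set is) = map ((!) w) is"
proof -
  have "filter (\<lambda>i. i \<in> set is) [0..<length w] = is"
    apply (rule sorted_distinct_set_unique)
    using assms by (auto simp: strict_sorted_iff intro: sorted_wrt_filter)
  then show ?thesis by (simp add: nths_idx)
qed

definition valid :: "nat list \<Rightarrow> (nat \<times> nat) list \<Rightarrow> bool" where
  "valid w ps \<longleftrightarrow> sorted_wrt (\<lambda>p q. fst p < fst q \<and> snd p < snd q) ps
     \<and> (\<forall>p\<in>set ps. fst p < length w \<and> snd p < length w \<and> w ! fst p = w ! snd p)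
     \<and> set (map fst ps) \<inter> set (map snd ps) = {}"

lemma LT_word_fin: "finite {length (nths w I) | I J. twins w I J}"
proof (rule finite_subset)
  show "{length (nths w I) | I J. twins w I J} \<subseteq> {..length w}"
    by (auto simp: length_nths intro: order_trans[OF card_mono[of "{..<length w}"]])
qed simp

lemma valid_LT: assumes "valid w ps" shows "length ps \<le> LT_word w"
proof -
  let ?I = "set (map fst ps)" and ?J = "set (map snd ps)"
  have s1: "sorted_wrt (<) (map fst ps)" and s2: "sorted_wrt (<) (map snd ps)"
    using assms unfolding valid_def by (auto simp: sorted_wrt_map elim: sorted_wrt_mono_rel[rotated])
  have n1: "nths w ?I = map ((!) w) (map fst ps)"
    by (rule nths_sorted_list[OF s1]) (use assms in \<open>auto simp: valid_def\<close>)
  have n2: "nths w ?J = map ((!) w) (map snd ps)"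
    by (rule nths_sorted_list[OF s2]) (use assms in \<open>auto simp: valid_def\<close>)
  have "map ((!) w) (map fst ps) = map ((!) w) (map snd ps)"
    using assms by (auto simp: valid_def)
  then have tw: "twins w ?I ?J" using assms n1 n2 by (auto simp: twins_def valid_def)
  have "length (nths w ?I) \<in> {length (nths w I) | I J. twins w I J}" using tw by blast
  then have "length (nths w ?I) \<le> LT_word w" unfolding LT_word_def
    using LT_word_fin by (rule Max_ge[rotated])
  then show ?thesis using n1 by simp
qed



definition R :: "('a \<Rightarrow> nat) \<Rightarrow> ('a \<Rightarrow> nat) \<Rightarrow> 'a \<Rightarrow> 'a \<Rightarrow> bool" where
  "R f g x y \<longleftrightarrow> f x < f y \<and> g x < g y"

definition chs where "chs f g T = {xs. sorted_wrt (R f g) xs \<and> set xs \<subseteq> T}"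

lemma chain_distinct: "sorted_wrt (R f g) xs \<Longrightarrow> distinct xs"
  by (induction xs) (auto simp: R_def)

lemma chain_len: "xs \<in> chs f g T \<Longrightarrow> finite T \<Longrightarrow> length xs \<le> card T"
  unfolding chs_def
  by (metis (mono_tags, lifting) card_mono chain_distinct distinct_card mem_Collect_eq)

lemma chain_last: "sorted_wrt (R f g) xs \<Longrightarrow> xs \<noteq> [] \<Longrightarrow> z \<in> set xs \<Longrightarrow> z = last xs \<or> R f g z (last xs)"
  by (induction xs) auto

definition ht where "ht f g T x = Max {length xs | xs. xs \<in> chs f g T \<and> xs \<noteq> [] \<and> last xs = x}"

lemma ht_fin: "finite T \<Longrightarrow> finite {length xs | xs. xs \<in> chs f g T \<and> xs \<noteq> [] \<and> last xs = x}"
  by (rule finite_subset[of _ "{..card T}"]) (auto dest: chain_len)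

lemma ht_bounds:
  assumes "finite T" "x \<in> T" "\<forall>xs \<in> chs f g T. length xs \<le> M"
  shows "1 \<le> ht f g T x" "ht f g T x \<le> M"
proof -
  have "[x] \<in> chs f g T" using assms by (auto simp: chs_def)
  then have m: "length [x] \<in> {length xs | xs. xs \<in> chs f g T \<and> xs \<noteq> [] \<and> last xs = x}" by force
  show "1 \<le> ht f g T x" unfolding ht_def using Max_ge[OF ht_fin[OF assms(1)] m] by simp
  show "ht f g T x \<le> M" unfolding ht_def
    using ht_fin[OF assms(1)] m assms(3) by (subst Max_le_iff) auto
qed

lemma ht_less:
  assumes "finite T" "x \<in> T" "y \<in> T" "R f g x y"
  shows "ht f g T x < ht f g T y"
proof -
  have "[x] \<in> chs f g T" using assms by (auto simp: chs_def)
  then have m: "length [x] \<in> {length xs | xs. xs \<in> chs f g T \<and> xs \<noteq> [] \<and> last xs = x}" by force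
  have "ht f g T x \<in> {length xs | xs. xs \<in> chs f g T \<and> xs \<noteq> [] \<and> last xs = x}"
    unfolding ht_def using ht_fin[OF assms(1)] m by (intro Max_in) auto
  then obtain xs where xs: "xs \<in> chs f g T" "xs \<noteq> []" "last xs = x" "length xs = ht f g T x" by (auto simp del: length_greater_0_conv)
  have "\<forall>z\<in>set xs. R f g z y"
  proof
    fix z assume "z \<in> set xs"
    then have "z = x \<or> R f g z x" using chain_last[of f g xs z] xs by (auto simp: chs_def)
    then show "R f g z y" using assms(4) by (auto simp: R_def)
  qed
  then have "xs @ [y] \<in> chs f g T" using xs assms by (auto simp: chs_def sorted_wrt_append)
  then have "length (xs @ [y]) \<in> {length xs | xs. xs \<in> chs f g T \<and> xs \<noteq> [] \<and> last xs = y}" by force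
  then have "length (xs @ [y]) \<le> ht f g T y" unfolding ht_def using ht_fin[OF assms(1)] by (rule Max_ge[rotated])
  then show ?thesis using xs by simp
qed



definition tset :: "nat \<times> nat \<times> nat \<Rightarrow> nat set" where
  "tset x = {fst x, fst (snd x), snd (snd x)}"

definition goodT :: "nat list \<Rightarrow> nat set \<Rightarrow> (nat \<times> nat \<times> nat) set \<Rightarrow> bool" where
  "goodT w P T \<longleftrightarrow> finite T \<and>
     (\<forall>x\<in>T. fst x < fst (snd x) \<and> fst (snd x) < snd (snd x) \<and> tset x \<subseteq> P
        \<and> w ! fst x = w ! fst (snd x) \<and> w ! fst (snd x) = w ! snd (snd x))
     \<and> (\<forall>x\<in>T. \<forall>y\<in>T. x \<noteq> y \<longrightarrow> tset x \<inter> tset y = {})"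

lemma three_distinct:
  assumes "finite F" "2 < card F"
  shows "\<exists>a b c. a \<in> F \<and> b \<in> F \<and> c \<in> F \<and> a < (b::nat) \<and> b < c"
proof -
  let ?l = "sorted_list_of_set F"
  have s: "sorted_wrt (<) ?l" by simp
  have len: "2 < length ?l" using assms by simp
  have "?l ! 0 < ?l ! 1" "?l ! 1 < ?l ! 2" using sorted_wrt_nth_less[OF s] len by auto
  moreover have e: "set ?l = F" using assms(1) by simp
  have m: "?l ! i \<in> F" if "i < length ?l" for i using e nth_mem that by blast
  moreover have "?l ! 0 \<in> F" "?l ! 1 \<in> F" "?l ! 2 \<in> F" using m len by auto
  ultimately show ?thesis by blast
qed

lemma triples:
  "finite P \<Longrightarrow> \<exists>T. goodT w P T \<and> card P \<le> 3 * card T + 2 * card ((!) w ` P)"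
proof (induction "card P" arbitrary: P rule: less_induct)
  case less
  show ?case
  proof (cases "\<exists>a b c. a\<in>P \<and> b\<in>P \<and> c\<in>P \<and> a<b \<and> b<c \<and> w!a = w!b \<and> w!b = w!c")
    case True
    then obtain a b c where abc: "a\<in>P" "b\<in>P" "c\<in>P" "a<b" "b<c" "w!a = w!b" "w!b = w!c" by blast
    define P' where "P' = P - {a,b,c}"
    have c3: "card {a,b,c} = 3" using abc by auto
    have cP: "card P' = card P - 3" unfolding P'_def using abc less.prems c3
      by (subst card_Diff_subset) auto
    have "card P \<ge> 3" using c3 abc less.prems by (metis card_mono empty_subsetI insert_subset)
    then have lt: "card P' < card P" using cP by simp
    from less.hyps[OF lt] less.prems obtain T' where T': "goodT w P' T'"
      and cT': "card P' \<le> 3 * card T' + 2 * card ((!) w ` P')" unfolding P'_def by auto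
    have nin: "(a,b,c) \<notin> T'" using T' unfolding goodT_def tset_def P'_def by auto
    have g: "goodT w P (insert (a,b,c) T')"
      using T' abc unfolding goodT_def tset_def P'_def by auto
    have "card ((!) w ` P') \<le> card ((!) w ` P)"
      unfolding P'_def using less.prems by (intro card_mono) auto
    moreover have "card (insert (a,b,c) T') = card T' + 1" using nin T' by (simp add: goodT_def)
    ultimately show ?thesis using g cT' cP \<open>card P \<ge> 3\<close> by (intro exI[of _ "insert (a,b,c) T'"]) auto
  next
    case False
    have fib: "card {i\<in>P. w!i = l} \<le> 2" for l
    proof (rule ccontr)
      assume "\<not> ?thesis"
      then have c2: "2 < card {i\<in>P. w!i = l}" by simp
      have fin: "finite {i\<in>P. w!i = l}" using less.prems by simp
      obtain a b c where m: "a \<in> {i\<in>P. w!i = l}" "b \<in> {i\<in>P. w!i = l}" "c \<in> {i\<in>P. w!i = l}" "a<b" "b<c"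
        using three_distinct[OF fin c2] by blast
      then have "a\<in>P \<and> b\<in>P \<and> c\<in>P \<and> a<b \<and> b<c \<and> w!a = w!b \<and> w!b = w!c" by simp
      with False show False by blast
    qed
    have "P = (\<Union>l\<in>(!) w ` P. {i\<in>P. w!i = l})" by auto
    then have "card P \<le> (\<Sum>l\<in>(!) w ` P. card {i\<in>P. w!i = l})"
      by (metis card_UN_le finite_imageI less.prems)
    also have "\<dots> \<le> (\<Sum>l\<in>(!) w ` P. 2)" by (intro sum_mono fib)
    finally have "card P \<le> 2 * card ((!) w ` P)" by simp
    moreover have "goodT w P {}" by (simp add: goodT_def)
    ultimately show ?thesis by (intro exI[of _ "{}"]) auto
  qed
qed



lemma chain_pairs:
  assumes g: "goodT w P T" and P: "P \<subseteq> {..<length w}" and xs: "xs \<in> chs f g T"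
   and fg: "\<forall>x\<in>T. f x < g x \<and> f x \<in> tset x \<and> g x \<in> tset x \<and> w!f x = w!g x"
  shows "valid w (map (\<lambda>x. (f x, g x)) xs) \<and> (\<forall>p\<in>set (map (\<lambda>x. (f x, g x)) xs). fst p \<in> P \<and> snd p \<in> P)"
proof -
  have sub: "set xs \<subseteq> T" and srt: "sorted_wrt (R f g) xs" using xs by (auto simp: chs_def)
  have tP: "tset x \<subseteq> P" if "x \<in> T" for x using g that by (auto simp: goodT_def)
  have inP: "f x \<in> P" "g x \<in> P" if "x \<in> T" for x using tP[OF that] fg that by auto
  have s: "sorted_wrt (\<lambda>p q. fst p < fst q \<and> snd p < snd q) (map (\<lambda>x. (f x, g x)) xs)"
  proof -
    have "R f g = (\<lambda>x y. f x < f y \<and> g x < g y)" by (simp add: fun_eq_iff R_def)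
    then show ?thesis using srt by (simp add: sorted_wrt_map)
  qed
  have d: "f x \<noteq> g y" if "x \<in> T" "y \<in> T" for x y
  proof (cases "x = y")
    case True then show ?thesis using fg that by (metis less_irrefl)
  next
    case False
    have dis: "\<forall>x\<in>T. \<forall>y\<in>T. x \<noteq> y \<longrightarrow> tset x \<inter> tset y = {}" using g by (simp add: goodT_def)
    then have "tset x \<inter> tset y = {}" using that False by blast
    moreover have "f x \<in> tset x" "g y \<in> tset y" using fg that by auto
    ultimately show ?thesis by (metis disjoint_iff)
  qed
  have "set (map fst (map (\<lambda>x. (f x, g x)) xs)) \<inter> set (map snd (map (\<lambda>x. (f x, g x)) xs)) = {}"
  proof -
    have "set (map fst (map (\<lambda>x. (f x, g x)) xs)) = f ` set xs" by (simp add: image_image)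
    moreover have "set (map snd (map (\<lambda>x. (f x, g x)) xs)) = g ` set xs" by (simp add: image_image)
    moreover have "f ` set xs \<inter> g ` set xs = {}" using d sub by blast
    ultimately show ?thesis by simp
  qed
  moreover have "\<forall>p\<in>set (map (\<lambda>x. (f x, g x)) xs). fst p < length w \<and> snd p < length w \<and> w ! fst p = w ! snd p"
  proof
    fix p assume "p \<in> set (map (\<lambda>x. (f x, g x)) xs)"
    then obtain x where x: "x \<in> set xs" "p = (f x, g x)" by auto
    then have xT: "x \<in> T" using sub by auto
    have "f x < length w" "g x < length w" using inP[OF xT] P by auto
    moreover have "w!f x = w!g x" using fg xT by blast
    ultimately show "fst p < length w \<and> snd p < length w \<and> w ! fst p = w ! snd p" using x by simp
  qed
  moreover have "\<forall>p\<in>set (map (\<lambda>x. (f x, g x)) xs). fst p \<in> P \<and> snd p \<in> P" using inP sub by auto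
  ultimately show ?thesis using s unfolding valid_def by blast
qed



definition p1 :: "nat \<times> nat \<times> nat \<Rightarrow> nat" where "p1 x = fst x"
definition p2 :: "nat \<times> nat \<times> nat \<Rightarrow> nat" where "p2 x = fst (snd x)"
definition p3 :: "nat \<times> nat \<times> nat \<Rightarrow> nat" where "p3 x = snd (snd x)"

lemma ES:
  assumes g: "goodT w P T" and P: "P \<subseteq> {..<length w}"
  shows "\<exists>ps. valid w ps \<and> (\<forall>p\<in>set ps. fst p \<in> P \<and> snd p \<in> P) \<and> card T \<le> (length ps)^3"
proof -
  have fin: "finite T" using g by (simp add: goodT_def)
  let ?C = "chs p1 p2 T \<union> chs p2 p3 T \<union> chs p1 p3 T"
  define M where "M = Max (length ` ?C)"
  have finC: "finite (length ` ?C)"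
    by (rule finite_subset[of _ "{..card T}"]) (auto dest: chain_len[OF _ fin])
  have "[] \<in> ?C" by (simp add: chs_def)
  then have "M \<in> length ` ?C" unfolding M_def using finC by (intro Max_in) auto
  then obtain xs where xs: "xs \<in> ?C" "length xs = M" by auto
  have bnd: "\<forall>ys \<in> ?C. length ys \<le> M" unfolding M_def using finC by auto
  have props: "\<forall>x\<in>T. p1 x < p2 x \<and> p2 x < p3 x \<and> p1 x \<in> tset x \<and> p2 x \<in> tset x \<and> p3 x \<in> tset x
      \<and> w!p1 x = w!p2 x \<and> w!p2 x = w!p3 x"
    using g by (auto simp: goodT_def p1_def p2_def p3_def tset_def)
  have ex: "\<exists>ps. valid w ps \<and> (\<forall>p\<in>set ps. fst p \<in> P \<and> snd p \<in> P) \<and> length ps = M"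
  proof -
    have f12: "\<forall>x\<in>T. p1 x < p2 x \<and> p1 x \<in> tset x \<and> p2 x \<in> tset x \<and> w!p1 x = w!p2 x" using props by blast
    have f23: "\<forall>x\<in>T. p2 x < p3 x \<and> p2 x \<in> tset x \<and> p3 x \<in> tset x \<and> w!p2 x = w!p3 x" using props by blast
    have f13: "\<forall>x\<in>T. p1 x < p3 x \<and> p1 x \<in> tset x \<and> p3 x \<in> tset x \<and> w!p1 x = w!p3 x"
    proof (intro ballI)
      fix x assume x: "x \<in> T"
      have "p1 x < p2 x" "p2 x < p3 x" "p1 x \<in> tset x" "p3 x \<in> tset x" "w!p1 x = w!p2 x" "w!p2 x = w!p3 x"
        using props x by auto
      then show "p1 x < p3 x \<and> p1 x \<in> tset x \<and> p3 x \<in> tset x \<and> w!p1 x = w!p3 x" by simp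
    qed
    consider "xs \<in> chs p1 p2 T" | "xs \<in> chs p2 p3 T" | "xs \<in> chs p1 p3 T" using xs by blast
    then show ?thesis
    proof cases
      case 1 show ?thesis using chain_pairs[OF g P 1 f12] xs(2) by (metis length_map)
    next
      case 2 show ?thesis using chain_pairs[OF g P 2 f23] xs(2) by (metis length_map)
    next
      case 3 show ?thesis using chain_pairs[OF g P 3 f13] xs(2) by (metis length_map)
    qed
  qed
  define \<phi> where "\<phi> x = (ht p1 p2 T x, ht p2 p3 T x, ht p1 p3 T x)" for x
  have b12: "\<forall>ys \<in> chs p1 p2 T. length ys \<le> M" and b23: "\<forall>ys \<in> chs p2 p3 T. length ys \<le> M"
    and b13: "\<forall>ys \<in> chs p1 p3 T. length ys \<le> M" using bnd by auto
  have img: "\<phi> ` T \<subseteq> {1..M} \<times> {1..M} \<times> {1..M}"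
    using ht_bounds[OF fin _ b12] ht_bounds[OF fin _ b23] ht_bounds[OF fin _ b13]
    by (auto simp: \<phi>_def)
  have inj: "inj_on \<phi> T"
  proof (rule inj_onI, rule ccontr)
    fix x y assume x: "x \<in> T" and y: "y \<in> T" and e: "\<phi> x = \<phi> y" and ne: "x \<noteq> y"
    have dj: "tset x \<inter> tset y = {}" using g x y ne by (auto simp: goodT_def)
    have m: "p1 x \<in> tset x" "p2 x \<in> tset x" "p3 x \<in> tset x" "p1 y \<in> tset y" "p2 y \<in> tset y" "p3 y \<in> tset y"
      using props x y by auto
    have "p1 x \<noteq> p1 y" "p2 x \<noteq> p2 y" "p3 x \<noteq> p3 y" using dj m by (metis disjoint_iff)+
    then consider "R p1 p2 x y" | "R p1 p2 y x" | "R p2 p3 x y" | "R p2 p3 y x" | "R p1 p3 x y" | "R p1 p3 y x"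
      unfolding R_def by (cases "p1 x < p1 y"; cases "p2 x < p2 y"; cases "p3 x < p3 y") auto
    then show False
    proof cases
      case 1 from ht_less[OF fin x y this] e show ?thesis by (simp add: \<phi>_def)
    next
      case 2 from ht_less[OF fin y x this] e show ?thesis by (simp add: \<phi>_def)
    next
      case 3 from ht_less[OF fin x y this] e show ?thesis by (simp add: \<phi>_def)
    next
      case 4 from ht_less[OF fin y x this] e show ?thesis by (simp add: \<phi>_def)
    next
      case 5 from ht_less[OF fin x y this] e show ?thesis by (simp add: \<phi>_def)
    next
      case 6 from ht_less[OF fin y x this] e show ?thesis by (simp add: \<phi>_def)
    qed
  qed
  have "card T = card (\<phi> ` T)" using inj by (simp add: card_image)
  also have "\<dots> \<le> card ({1..M} \<times> {1..M} \<times> {1..M})" using img by (intro card_mono) auto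
  also have "\<dots> = M^3" by (simp add: card_cartesian_product power3_eq_cube)
  finally show ?thesis using ex by auto
qed



lemma c_cube: fixes k :: nat assumes "k \<ge> 1"
  shows "(3 powr (-1/3) * real k powr (1/3)) ^ 3 = real k / 3"
proof -
  have "(3 powr (-1/3) * real k powr (1/3)) ^ 3 = (3 powr (-1/3)) ^ 3 * (real k powr (1/3)) ^ 3"
    by (simp add: power_mult_distrib)
  also have "((3::real) powr (-1/3)) ^ 3 = 3 powr (-1)" by (subst powr_power) auto
  also have "(real k powr (1/3)) ^ 3 = real k powr 1" using assms by (subst powr_power) auto
  finally show ?thesis using assms by (simp add: powr_minus_divide)
qed

lemma c_le: fixes k L :: nat assumes "k \<ge> 1" "k \<le> 3 * L^3"
  shows "3 powr (-1/3) * real k powr (1/3) \<le> real L"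
proof -
  have "real k \<le> 3 * real L ^ 3" using assms(2) by (metis of_nat_le_iff of_nat_mult of_nat_numeral of_nat_power)
  then have h: "(3 powr (-1/3) * real k powr (1/3)) ^ 3 \<le> real L ^ 3" unfolding c_cube[OF assms(1)] by simp
  show ?thesis using power_le_imp_le_base[of _ 2 "real L"] h by simp
qed

lemma final_arith: fixes k n q :: nat assumes "k \<ge> 1" "q = n div (3*k)" "x \<ge> real q * (3 powr (-1/3) * real k powr (1/3))"
  shows "x \<ge> 3 powr (-4/3) * real k powr (-2/3) * real n - 3 powr (-1/3) * real k powr (1/3)"
proof -
  define c where "c = 3 powr (-1/3) * real k powr (1/3)"
  have c0: "c \<ge> 0" by (simp add: c_def)
  have kp: "real k > 0" using assms by simp
  have e1: "3 powr (-4/3) * real k powr (-2/3) = c / (3 * real k)"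
  proof -
    have a1: "real k powr (-1) = 1 / real k" using kp by (simp add: powr_minus_divide)
    have a2: "(3::real) powr (-1) = 1 / 3" by (simp add: powr_minus_divide)
    have a3: "(3::real) powr (-1/3) * 3 powr (-1) = 3 powr (-4/3)"
    proof -
      have "(3::real) powr (-1/3) * 3 powr (-1) = 3 powr (-1/3 + -1)" by (rule powr_add[symmetric])
      also have "(-1/3 + -1) = (-4/3::real)" by simp
      finally show ?thesis .
    qed
    have a4: "real k powr (1/3) * real k powr (-1) = real k powr (-2/3)"
    proof -
      have "real k powr (1/3) * real k powr (-1) = real k powr (1/3 + -1)" by (rule powr_add[symmetric])
      also have "(1/3 + -1) = (-2/3::real)" by simp
      finally show ?thesis .
    qed
    have "c / (3 * real k) = ((3::real) powr (-1/3) * 3 powr (-1)) * (real k powr (1/3) * real k powr (-1))"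
      unfolding c_def a1 a2 by simp
    also have "\<dots> = 3 powr (-4/3) * real k powr (-2/3)" using a3 a4 by simp
    finally show ?thesis by simp
  qed
  have m: "real n < (real q + 1) * (3 * real k)"
  proof -
    have "n = (n div (3*k)) * (3*k) + n mod (3*k)" by (metis div_mult_mod_eq)
    moreover have "n mod (3*k) < 3*k" using assms(1) by simp
    ultimately have "n < (q+1)*(3*k)" using assms(2) by (metis add_mult_distrib mult_1 nat_add_left_cancel_less)
    then have "real n < real ((q+1)*(3*k))" by (simp only: of_nat_less_iff)
    then show ?thesis by (simp add: algebra_simps)
  qed
  have "real n / (3 * real k) - 1 \<le> real q" using m kp by (simp add: field_simps)
  then have "c * (real n / (3 * real k) - 1) \<le> c * real q" using c0 by (rule mult_left_mono) 
  moreover have "3 powr (-4/3) * real k powr (-2/3) * real n - c = c * (real n / (3 * real k) - 1)"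
    unfolding e1 by (simp add: field_simps)
  ultimately show ?thesis using assms(3) unfolding c_def[symmetric] by (simp add: mult.commute)
qed



lemma valid_append:
  assumes "valid w a" "valid w b" "\<forall>p\<in>set a. fst p < B \<and> snd p < B" "\<forall>r\<in>set b. B \<le> fst r \<and> B \<le> snd r"
  shows "valid w (a @ b)"
proof -
  have cross: "\<forall>x\<in>set a. \<forall>y\<in>set b. fst x < fst y \<and> snd x < snd y"
  proof (intro ballI)
    fix x y assume x: "x \<in> set a" and y: "y \<in> set b"
    have "fst x < B" "snd x < B" using assms(3) x by blast+
    moreover have "B \<le> fst y" "B \<le> snd y" using assms(4) y by blast+
    ultimately show "fst x < fst y \<and> snd x < snd y" by linarith
  qed
  have s: "sorted_wrt (\<lambda>p q. fst p < fst q \<and> snd p < snd q) (a @ b)"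
    using assms(1,2) cross unfolding valid_def sorted_wrt_append by blast
  have d1: "set (map fst a) \<inter> set (map snd b) = {}"
  proof -
    have "\<forall>x\<in>fst ` set a. x < B" using assms(3) by blast
    moreover have "\<forall>y\<in>snd ` set b. B \<le> y" using assms(4) by blast
    ultimately show ?thesis unfolding set_map disjoint_iff by (meson not_le)
  qed
  have d2: "set (map fst b) \<inter> set (map snd a) = {}"
  proof -
    have "\<forall>x\<in>snd ` set a. x < B" using assms(3) by blast
    moreover have "\<forall>y\<in>fst ` set b. B \<le> y" using assms(4) by blast
    ultimately show ?thesis unfolding set_map disjoint_iff by (meson not_le)
  qed
  have d0: "set (map fst a) \<inter> set (map snd a) = {}" "set (map fst b) \<inter> set (map snd b) = {}"
    using assms(1,2) unfolding valid_def by blast+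
  have "set (map fst (a@b)) \<inter> set (map snd (a@b)) = {}"
    using d0 d1 d2 by (simp only: map_append set_append) blast
  moreover have "\<forall>p\<in>set (a@b). fst p < length w \<and> snd p < length w \<and> w ! fst p = w ! snd p"
    using assms(1,2) unfolding valid_def by (simp only: set_append) blast
  ultimately show ?thesis using s unfolding valid_def by blast
qed

lemma seg:
  fixes k j :: nat
  assumes w: "set w \<subseteq> {1..k}" and len: "(j+1)*(3*k) \<le> length w"
  shows "\<exists>ps. valid w ps \<and> (\<forall>p\<in>set ps. j*(3*k) \<le> fst p \<and> fst p < (j+1)*(3*k) \<and> j*(3*k) \<le> snd p \<and> snd p < (j+1)*(3*k))
     \<and> k \<le> 3 * (length ps)^3"
proof -
  define P where "P = {j*(3*k)..<(j+1)*(3*k)}"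
  have fP: "finite P" and cP: "card P = 3*k" unfolding P_def by (auto simp: algebra_simps)
  have Pw: "P \<subseteq> {..<length w}" unfolding P_def using len by auto
  have im: "(!) w ` P \<subseteq> {1..k}"
  proof
    fix y assume "y \<in> (!) w ` P"
    then obtain i where i: "i \<in> P" "y = w!i" by blast
    then have "y \<in> set w" using Pw by auto
    then show "y \<in> {1..k}" using w by blast
  qed
  have cl: "card ((!) w ` P) \<le> k" using card_mono[OF _ im] by simp
  obtain T where T: "goodT w P T" and cT: "card P \<le> 3 * card T + 2 * card ((!) w ` P)"
    using triples[OF fP] by blast
  have kT: "k \<le> 3 * card T" using cT cP cl by linarith
  obtain ps where ps: "valid w ps" "\<forall>p\<in>set ps. fst p \<in> P \<and> snd p \<in> P" "card T \<le> (length ps)^3"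
    using ES[OF T Pw] by blast
  show ?thesis
    by (rule exI[of _ ps]) (use ps kT in \<open>auto simp: P_def\<close>)
qed

lemma comb:
  fixes k :: nat
  assumes w: "set w \<subseteq> {1..k}" and k1: "k \<ge> 1"
  shows "q*(3*k) \<le> length w \<Longrightarrow> \<exists>ps. valid w ps \<and> (\<forall>p\<in>set ps. fst p < q*(3*k) \<and> snd p < q*(3*k))
     \<and> real q * (3 powr (-1/3) * real k powr (1/3)) \<le> real (length ps)"
proof (induction q)
  case 0
  show ?case by (rule exI[of _ "[]"]) (simp add: valid_def)
next
  case (Suc q)
  then obtain ps where ps: "valid w ps" "\<forall>p\<in>set ps. fst p < q*(3*k) \<and> snd p < q*(3*k)"
     "real q * (3 powr (-1/3) * real k powr (1/3)) \<le> real (length ps)" by auto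
  obtain qs where qs: "valid w qs" "\<forall>p\<in>set qs. q*(3*k) \<le> fst p \<and> fst p < (q+1)*(3*k) \<and> q*(3*k) \<le> snd p \<and> snd p < (q+1)*(3*k)"
    "k \<le> 3 * (length qs)^3"
    using seg[OF w, of q] Suc.prems by auto
  have v: "valid w (ps @ qs)" by (rule valid_append[OF ps(1) qs(1) ps(2)]) (use qs(2) in auto)
  have c: "3 powr (-1/3) * real k powr (1/3) \<le> real (length qs)" by (rule c_le[OF k1 qs(3)])
  have b: "\<forall>p\<in>set (ps @ qs). fst p < Suc q*(3*k) \<and> snd p < Suc q*(3*k)"
    using ps(2) qs(2) by (auto simp: algebra_simps)
  have "real (Suc q) * (3 powr (-1/3) * real k powr (1/3)) \<le> real (length (ps @ qs))"
    using ps(3) c by (simp add: algebra_simps)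
  then show ?case using v b by blast
qed

theorem theorem3:
  fixes k n :: nat
  assumes "k \<ge> 1" and "n \<ge> 1"
  shows "real (LT k n) \<ge> 3 powr (-4/3) * real k powr (-2/3) * real n - 3 powr (-1/3) * real k powr (1/3)"
proof -
  define q where "q = n div (3*k)"
  have fin: "finite (words k n)"
  proof -
    have "words k n = {xs. set xs \<subseteq> {1..k} \<and> length xs = n}" by (auto simp: words_def)
    then show ?thesis using finite_lists_length_eq[of "{1..k}" n] by simp
  qed
  have ne: "replicate n 1 \<in> words k n" using assms by (auto simp: words_def)
  have "LT k n \<in> LT_word ` words k n" unfolding LT_def using fin ne by (intro Min_in) auto
  then obtain w where w: "w \<in> words k n" "LT k n = LT_word w" by auto
  have "q*(3*k) \<le> n" unfolding q_def by (metis div_mult_mod_eq le_add1)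
  then have qn: "q*(3*k) \<le> length w" using w(1) by (simp add: words_def)
  obtain ps where ps: "valid w ps" "real q * (3 powr (-1/3) * real k powr (1/3)) \<le> real (length ps)"
    using comb[of w k q] w(1) assms(1) qn by (auto simp: words_def)
  have "length ps \<le> LT k n" using valid_LT[OF ps(1)] w(2) by simp
  then have "real q * (3 powr (-1/3) * real k powr (1/3)) \<le> real (LT k n)" using ps(2) by linarith
  then show ?thesis by (rule final_arith[OF assms(1) q_def])
qed

end
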